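(* Let $4\le p\le n-1$ and let $j\in\{1,\dots,n-1\}$ be an internal node. The degree constraint $x(\delta^+(j))\le 1$ is valid for $P^p_{0,n}(D)$ and defines a facet of $P^p_{0,n}(D)$.
   Context: Let $n$ be a positive integer, $V=\{0,1,\dots,n\}$, and let $D=(V,A)$ be the digraph whose arc set $A$ consists of all ordered pairs $(i,j)$ with $i\neq j$, $i,j\in V$, except that no arc enters node $0$, no arc leaves node $n$, and the arc $(0,n)$ is absent. Nodes $1,\dots,n-1$ are internal nodes. A $(0,n)$-$p$-path is a simple directed path in $D$ from $0$ to $n$ with exactly $p$ arcs. $P^p_{0,n}(D)\subseteq\mathbb{R}^A$ is the convex hull of the incidence vectors of all $(0,n)$-$p$-paths. For $F\subseteq A$, $x(F)=\sum_{(i,j)\in F}x_{ij}$; $\delta^+(k)$ ($\delta^-(k)$) is the set of arcs of $A$ leaving (entering) node $k$. Facet defining means valid and defining a face of dimension $\dim P^p_{0,n}(D)-1$. *)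

theory Defs
  imports Complex_Main
begin

(* Points of R^A are represented as functions (nat \<times> nat) \<Rightarrow> real; coordinates outside
   the arc set A are irrelevant (all points considered vanish there). *)
type_synonym point = "nat \<times> nat \<Rightarrow> real"

definition arcs :: "nat \<Rightarrow> (nat \<times> nat) set" where
  "arcs n = {(i,j). i \<le> n \<and> j \<le> n \<and> i \<noteq> j \<and> j \<noteq> 0 \<and> i \<noteq> n \<and> (i,j) \<noteq> (0,n)}"

definition is_p_path :: "nat \<Rightarrow> nat \<Rightarrow> nat list \<Rightarrow> bool" where
  "is_p_path n p vs \<longleftrightarrow> length vs = p + 1 \<and> distinct vs \<and> hd vs = 0 \<and> last vs = n \<and>
     (\<forall>i<p. (vs ! i, vs ! Suc i) \<in> arcs n)"

definition path_arcs :: "nat list \<Rightarrow> (nat \<times> nat) set" where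
  "path_arcs vs = set (zip vs (tl vs))"

definition incidence :: "(nat \<times> nat) set \<Rightarrow> point" where
  "incidence F = (\<lambda>a. if a \<in> F then 1 else 0)"

definition conv_hull :: "point set \<Rightarrow> point set" where
  "conv_hull S = {x. \<exists>(k::nat) c v. (\<forall>i<k. c i \<ge> (0::real) \<and> v i \<in> S) \<and>
                         (\<Sum>i<k. c i) = 1 \<and> x = (\<lambda>a. \<Sum>i<k. c i * v i a)}"

definition path_polytope :: "nat \<Rightarrow> nat \<Rightarrow> point set" where
  "path_polytope n p = conv_hull {incidence (path_arcs vs) | vs. is_p_path n p vs}"

definition xsum :: "point \<Rightarrow> (nat \<times> nat) set \<Rightarrow> real" where
  "xsum x F = (\<Sum>a\<in>F. x a)"

definition delta_out :: "nat \<Rightarrow> nat \<Rightarrow> (nat \<times> nat) set" where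
  "delta_out n k = {a \<in> arcs n. fst a = k}"

definition delta_in :: "nat \<Rightarrow> nat \<Rightarrow> (nat \<times> nat) set" where
  "delta_in n k = {a \<in> arcs n. snd a = k}"

definition aff_indep :: "nat \<Rightarrow> (nat \<Rightarrow> point) \<Rightarrow> bool" where
  "aff_indep k v \<longleftrightarrow> (\<forall>c::nat \<Rightarrow> real. (\<Sum>i\<le>k. c i) = 0 \<and> (\<forall>a. (\<Sum>i\<le>k. c i * v i a) = 0)
                        \<longrightarrow> (\<forall>i\<le>k. c i = 0))"

definition adim :: "point set \<Rightarrow> int" where
  "adim S = (if S = {} then -1
             else int (GREATEST k. \<exists>v. (\<forall>i\<le>k. v i \<in> S) \<and> aff_indep k v))"

definition facet_defining :: "point set \<Rightarrow> (nat \<times> nat) set \<Rightarrow> real \<Rightarrow> bool" where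
  "facet_defining P F b \<longleftrightarrow> (\<forall>x\<in>P. xsum x F \<le> b) \<and>
     adim {x \<in> P. xsum x F = b} = adim P - 1"

end

theory Submission
  imports Defs "HOL-Library.Function_Algebras"
begin

definition sc :: "real \<Rightarrow> point \<Rightarrow> point" where "sc r f = (\<lambda>a. r * f a)"

interpretation V: vector_space sc
  by unfold_locales (auto simp: sc_def fun_eq_iff algebra_simps)

interpretation R: vector_space "(*) :: real \<Rightarrow> real \<Rightarrow> real"
  by unfold_locales (auto simp: algebra_simps)

interpretation VP: vector_space_pair sc "(*) :: real \<Rightarrow> real \<Rightarrow> real" ..

lemma sum_fun_apply: "(\<Sum>i\<in>S. f i) (a::'b) = (\<Sum>i\<in>S. (f i a :: real))"
  by (induction S rule: infinite_finite_induct) auto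

lemma sc_apply[simp]: "sc r f a = r * f a" by (simp add: sc_def)

lemma lin_vanish:
  assumes "Vector_Spaces.linear sc (*) f" "\<And>b. b \<in> B \<Longrightarrow> f b = 0" "x \<in> V.span B"
  shows "f x = 0"
proof -
  have mh: "module_hom sc (*) f" using assms(1) by (rule module_hom_linearI)
  show ?thesis by (rule module_hom.eq_0_on_span[OF mh assms(2) assms(3)])
qed

lemma exists_functional:
  assumes "v \<notin> V.span G"
  shows "\<exists>f. Vector_Spaces.linear sc (*) f \<and> (\<forall>g\<in>G. f g = 0) \<and> f v = 1"
proof -
  obtain B where B: "B \<subseteq> G" "V.independent B" "G \<subseteq> V.span B" "card B = V.dim G"
    by (rule V.basis_exists[of "G"])
  have sB: "V.span B \<subseteq> V.span G" using B(1) by (rule V.span_mono)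
  have vB: "v \<notin> V.span B" using assms sB by blast
  have ind: "V.independent (insert v B)" using V.independent_insertI[OF vB B(2)] .
  define f where "f = VP.construct (insert v B) (\<lambda>b. if b = v then 1 else 0)"
  have lin: "Vector_Spaces.linear sc (*) f" unfolding f_def by (rule VP.linear_construct[OF ind])
  have fb: "f b = 0" if "b \<in> B" for b
  proof -
    have "b \<noteq> v" using that vB V.span_base by blast
    have "f b = (\<lambda>b. if b = v then 1 else (0::real)) b" unfolding f_def
      by (rule VP.construct_basis[OF ind]) (use that in blast)
    then show ?thesis using \<open>b \<noteq> v\<close> by simp
  qed
  have "f g = 0" if "g \<in> G" for g
  proof -
    have "g \<in> V.span B" using B(3) that by blast
    then show ?thesis using lin_vanish[OF lin fb] by blast
  qed
  moreover have "f v = 1"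
  proof -
    have "f v = (\<lambda>b. if b = v then 1 else (0::real)) v" unfolding f_def
      by (rule VP.construct_basis[OF ind]) blast
    then show ?thesis by simp
  qed
  ultimately show ?thesis using lin by blast
qed

lemma card_le_dim:
  assumes "finite E" "W \<subseteq> V.span E" "V.independent B" "B \<subseteq> V.span W"
  shows "card B \<le> V.dim W"
proof -
  obtain C where C: "C \<subseteq> W" "V.independent C" "W \<subseteq> V.span C" "card C = V.dim W"
    by (rule V.basis_exists[of "W"])
  have "C \<subseteq> V.span E" using C(1) assms(2) by (rule subset_trans)
  then have "finite C" using V.independent_span_bound[OF assms(1) C(2)] by simp
  have "V.span W \<subseteq> V.span C" by (rule V.span_minimal[OF C(3) V.subspace_span])
  then have "B \<subseteq> V.span C" using assms(4) by (rule subset_trans[rotated])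
  then have "card B \<le> card C" using V.independent_span_bound[OF \<open>finite C\<close> assms(3)] by simp
  then show ?thesis using C(4) by simp
qed

lemma dim_mono':
  assumes "finite E" "W \<subseteq> V.span E" "U \<subseteq> V.span W"
  shows "V.dim U \<le> V.dim W"
proof -
  obtain C where C: "C \<subseteq> U" "V.independent C" "U \<subseteq> V.span C" "card C = V.dim U"
    by (rule V.basis_exists[of "U"])
  have "C \<subseteq> V.span W" using C(1) assms(3) by (rule subset_trans)
  from card_le_dim[OF assms(1,2) C(2) this] show ?thesis using C(4) by simp
qed

lemma dim_insert_le:
  assumes "finite E" "G \<subseteq> V.span E"
  shows "V.dim (insert d G) \<le> V.dim G + 1"
proof -
  obtain C where C: "C \<subseteq> G" "V.independent C" "G \<subseteq> V.span C" "card C = V.dim G"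
    by (rule V.basis_exists[of "G"])
  have "C \<subseteq> V.span E" using C(1) assms(2) by (rule subset_trans)
  then have "finite C" using V.independent_span_bound[OF assms(1) C(2)] by simp
  have "V.span C \<subseteq> V.span (insert d C)" by (rule V.span_mono) (rule subset_insertI)
  then have "G \<subseteq> V.span (insert d C)" using C(3) by (rule subset_trans[rotated])
  moreover have "d \<in> V.span (insert d C)" by (rule V.span_base) (rule insertI1)
  ultimately have "insert d G \<subseteq> V.span (insert d C)" by (rule insert_subsetI[rotated])
  then have "V.dim (insert d G) \<le> card (insert d C)"
    using \<open>finite C\<close> by (intro V.dim_le_card) auto
  also have "\<dots> \<le> card C + 1" by (simp add: \<open>finite C\<close> card_insert_if)
  finally show ?thesis using C(4) by simp
qed

lemma dim_insert_ge:
  assumes "finite E" "H \<subseteq> V.span E" "d \<notin> V.span G" "insert d G \<subseteq> V.span H"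
  shows "V.dim G + 1 \<le> V.dim H"
proof -
  obtain C where C: "C \<subseteq> G" "V.independent C" "G \<subseteq> V.span C" "card C = V.dim G"
    by (rule V.basis_exists[of "G"])
  have "V.span C \<subseteq> V.span G" using C(1) by (rule V.span_mono)
  then have dC: "d \<notin> V.span C" using assms(3) by blast
  then have "d \<notin> C" using V.span_base by blast
  have ind: "V.independent (insert d C)" using V.independent_insertI[OF dC C(2)] .
  have sH: "V.span H \<subseteq> V.span E" by (rule V.span_minimal[OF assms(2) V.subspace_span])
  have iC: "insert d C \<subseteq> V.span H" using assms(4) C(1) by blast
  then have "insert d C \<subseteq> V.span E" using sH by (rule subset_trans)
  then have "finite (insert d C)" using V.independent_span_bound[OF assms(1) ind] by simp
  have "card (insert d C) \<le> V.dim H"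
    using card_le_dim[OF assms(1,2) ind iC] .
  then show ?thesis using \<open>d \<notin> C\<close> \<open>finite (insert d C)\<close> C(4) by simp
qed

lemma ifmul: "(if P then 1 else 0) * (x::real) = (if P then x else 0)" by simp

lemma aff_indep_le:
  assumes E: "finite E" "(\<lambda>x. x - x0) ` S \<subseteq> V.span E"
    and v: "\<forall>i\<le>k. v i \<in> S" and ai: "aff_indep k v"
  shows "k \<le> V.dim ((\<lambda>x. x - x0) ` S)"
proof -
  define b where "b i = v (Suc i) - v 0" for i
  have inj: "inj_on b {..<k}"
  proof (rule inj_onI, rule ccontr)
    fix i l assume il: "i \<in> {..<k}" "l \<in> {..<k}" "b i = b l" "i \<noteq> l"
    define c where "c t = (if t = Suc i then 1 else (0::real)) - (if t = Suc l then 1 else 0)" for t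
    have "(\<Sum>t\<le>k. c t) = 0"
      using il by (simp add: c_def sum_subtractf sum.delta)
    moreover have "\<forall>a. (\<Sum>t\<le>k. c t * v t a) = 0"
    proof
      fix a
      have "(\<Sum>t\<le>k. c t * v t a) = v (Suc i) a - v (Suc l) a"
        using il by (simp add: c_def sum_subtractf sum.delta left_diff_distrib ifmul)
      also have "\<dots> = 0"
      proof -
        have "v (Suc i) = v (Suc l)" using il(3) unfolding b_def by (metis diff_add_cancel)
        then show ?thesis by simp
      qed
      finally show "(\<Sum>t\<le>k. c t * v t a) = 0" .
    qed
    ultimately have "\<forall>t\<le>k. c t = 0" using ai unfolding aff_indep_def by blast
    then have "c (Suc i) = 0" using il by auto
    then show False using il by (simp add: c_def)
  qed
  have ind: "V.independent (b ` {..<k})"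
  proof -
    have fin: "finite (b ` {..<k})" by simp
    have "\<not> V.dependent (b ` {..<k})"
    proof
      assume "V.dependent (b ` {..<k})"
      then obtain u where u: "\<exists>x\<in>b ` {..<k}. u x \<noteq> 0" "(\<Sum>x\<in>b ` {..<k}. sc (u x) x) = 0"
        using V.dependent_finite[OF fin] by blast
      have s0: "(\<Sum>i<k. sc (u (b i)) (b i)) = 0"
        using u(2) sum.reindex[OF inj, of "\<lambda>x. sc (u x) x"] by simp
      define c where "c t = (if t = 0 then - (\<Sum>i<k. u (b i)) else if t \<le> k then u (b (t - 1)) else 0)" for t
      have "(\<Sum>t\<le>k. c t) = 0"
        by (simp add: sum.atMost_shift c_def)
      moreover have "\<forall>a. (\<Sum>t\<le>k. c t * v t a) = 0"
      proof
        fix a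
        have "(\<Sum>t\<le>k. c t * v t a) = - (\<Sum>i<k. u (b i)) * v 0 a + (\<Sum>i<k. u (b i) * v (Suc i) a)"
          by (simp add: sum.atMost_shift c_def)
        also have "\<dots> = (\<Sum>i<k. u (b i) * (v (Suc i) a - v 0 a))"
          by (simp add: algebra_simps sum_subtractf sum_distrib_right sum_distrib_left)
        also have "\<dots> = (\<Sum>i<k. sc (u (b i)) (b i)) a"
          by (simp add: sum_fun_apply b_def)
        also have "\<dots> = 0" using s0 by simp
        finally show "(\<Sum>t\<le>k. c t * v t a) = 0" .
      qed
      ultimately have "\<forall>t\<le>k. c t = 0" using ai unfolding aff_indep_def by blast
      then have "\<forall>i<k. u (b i) = 0"
      proof (intro allI impI)
        fix i assume "\<forall>t\<le>k. c t = 0" "i < k"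
        then have "c (Suc i) = 0" by auto
        then show "u (b i) = 0" using \<open>i < k\<close> by (simp add: c_def)
      qed
      then show False using u(1) by auto
    qed
    then show ?thesis .
  qed
  have sub: "b ` {..<k} \<subseteq> V.span ((\<lambda>x. x - x0) ` S)"
  proof
    fix y assume "y \<in> b ` {..<k}"
    then obtain i where i: "i < k" "y = b i" by auto
    have "v (Suc i) - x0 \<in> V.span ((\<lambda>x. x - x0) ` S)" "v 0 - x0 \<in> V.span ((\<lambda>x. x - x0) ` S)"
      using v i(1) by (auto intro!: V.span_base)
    then have "(v (Suc i) - x0) - (v 0 - x0) \<in> V.span ((\<lambda>x. x - x0) ` S)" by (rule V.span_diff)
    then show "y \<in> V.span ((\<lambda>x. x - x0) ` S)" using i by (simp add: b_def)
  qed
  have "card (b ` {..<k}) = k" using card_image[OF inj] by simp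
  then show ?thesis using card_le_dim[OF E ind sub] by simp
qed

lemma aff_indep_ex:
  assumes E: "finite E" "(\<lambda>x. x - x0) ` S \<subseteq> V.span E" and x0: "x0 \<in> S"
  shows "\<exists>v. (\<forall>i\<le>V.dim ((\<lambda>x. x - x0) ` S). v i \<in> S) \<and> aff_indep (V.dim ((\<lambda>x. x - x0) ` S)) v"
proof -
  let ?D = "(\<lambda>x. x - x0) ` S"
  obtain C where C: "C \<subseteq> ?D" "V.independent C" "?D \<subseteq> V.span C" "card C = V.dim ?D"
    by (rule V.basis_exists[of "?D"])
  have finC: "finite C" using V.independent_span_bound[OF E(1) C(2)] C(1) E(2) by blast
  obtain g where g: "bij_betw g {0..<card C} C" using ex_bij_betw_nat_finite[OF finC] by blast
  define d where "d = card C"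
  define v where "v t = (if t = 0 then x0 else g (t - 1) + x0)" for t
  have vS: "\<forall>i\<le>d. v i \<in> S"
  proof (intro allI impI)
    fix i assume "i \<le> d"
    show "v i \<in> S"
    proof (cases "i = 0")
      case True then show ?thesis using x0 by (simp add: v_def)
    next
      case False
      then have "g (i - 1) \<in> C" using g \<open>i \<le> d\<close> unfolding d_def bij_betw_def by auto
      then obtain y where "y \<in> S" "g (i - 1) = y - x0" using C(1) by auto
      then show ?thesis using False by (simp add: v_def)
    qed
  qed
  have ai: "aff_indep d v"
    unfolding aff_indep_def
  proof (intro allI impI)
    fix c :: "nat \<Rightarrow> real" and i
    assume h: "(\<Sum>i\<le>d. c i) = 0 \<and> (\<forall>a. (\<Sum>i\<le>d. c i * v i a) = 0)" and "i \<le> d"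
    have inj: "inj_on g {..<d}" using g unfolding bij_betw_def d_def by (simp add: lessThan_atLeast0)
    have imgC: "g ` {..<d} = C" using g unfolding bij_betw_def d_def by (simp add: lessThan_atLeast0)
    have s0: "(\<Sum>i<d. sc (c (Suc i)) (g i)) = 0"
    proof
      fix a
      have "(\<Sum>i<d. sc (c (Suc i)) (g i)) a = (\<Sum>i<d. c (Suc i) * g i a)" by (simp add: sum_fun_apply)
      also have "\<dots> = (\<Sum>i<d. c (Suc i) * v (Suc i) a) - (\<Sum>i<d. c (Suc i)) * x0 a"
        by (simp add: v_def algebra_simps sum_subtractf sum_distrib_right sum_distrib_left sum.distrib)
      also have "\<dots> = (\<Sum>t\<le>d. c t * v t a) - (\<Sum>t\<le>d. c t) * x0 a"
        by (simp add: sum.atMost_shift v_def algebra_simps)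
      also have "\<dots> = 0"
      proof -
        have s1: "(\<Sum>t\<le>d. c t * v t a) = 0" using h by blast
        have s2: "(\<Sum>t\<le>d. c t) = 0" using h by blast
        show ?thesis by (simp only: s1 s2)
      qed
      finally show "(\<Sum>i<d. sc (c (Suc i)) (g i)) a = 0 a" by simp
    qed
    define u where "u y = c (Suc (the_inv_into {..<d} g y))" for y
    have "(\<Sum>y\<in>C. sc (u y) y) = (\<Sum>i<d. sc (u (g i)) (g i))"
      using sum.reindex[OF inj, of "\<lambda>y. sc (u y) y"] imgC by simp
    also have "\<dots> = (\<Sum>i<d. sc (c (Suc i)) (g i))"
      by (rule sum.cong) (auto simp: u_def the_inv_into_f_f[OF inj])
    finally have "(\<Sum>y\<in>C. sc (u y) y) = 0" using s0 by simp
    then have uz: "\<forall>y\<in>C. u y = 0" using C(2) finC V.dependent_finite by blast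
    have cS: "c (Suc l) = 0" if "l < d" for l
    proof -
      have "g l \<in> C" using imgC that by auto
      then have "u (g l) = 0" using uz by blast
      moreover have "the_inv_into {..<d} g (g l) = l" using the_inv_into_f_f[OF inj] that by simp
      ultimately show ?thesis by (simp add: u_def)
    qed
    show "c i = 0"
    proof (cases i)
      case 0
      have "(\<Sum>t\<le>d. c t) = c 0 + (\<Sum>l<d. c (Suc l))" by (simp add: sum.atMost_shift)
      also have "(\<Sum>l<d. c (Suc l)) = 0" using cS by simp
      finally show ?thesis using h 0 by simp
    next
      case (Suc l) then show ?thesis using cS \<open>i \<le> d\<close> by simp
    qed
  qed
  show ?thesis using vS ai C(4) unfolding d_def by auto
qed

lemma adim_eq:
  assumes E: "finite E" "(\<lambda>x. x - x0) ` S \<subseteq> V.span E" and x0: "x0 \<in> S"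
  shows "adim S = int (V.dim ((\<lambda>x. x - x0) ` S))"
proof -
  have "S \<noteq> {}" using x0 by auto
  moreover have "(GREATEST k. \<exists>v. (\<forall>i\<le>k. v i \<in> S) \<and> aff_indep k v) = V.dim ((\<lambda>x. x - x0) ` S)"
    by (rule Greatest_equality) (use aff_indep_ex[OF E x0] aff_indep_le[OF E] in blast)+
  ultimately show ?thesis unfolding adim_def by simp
qed

fun pw :: "(nat \<times> nat \<Rightarrow> real) \<Rightarrow> nat list \<Rightarrow> real" where
  "pw w (x # y # zs) = w (x, y) + pw w (y # zs)"
| "pw w _ = 0"

lemma pw_set: "distinct vs \<Longrightarrow> pw w vs = (\<Sum>a\<in>set (zip vs (tl vs)). w a)"
proof (induction w vs rule: pw.induct)
  case (1 w x y zs)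
  have "(x, y) \<notin> set (zip (y # zs) zs)" using 1(2) by (auto dest: set_zip_leftD)
  then show ?case using 1 by simp
qed auto

lemma pw_snoc: "xs \<noteq> [] \<Longrightarrow> pw w (xs @ [y]) = pw w xs + w (last xs, y)"
proof (induction xs)
  case (Cons x xs)
  then show ?case by (cases xs) auto
qed simp

lemma pw_cons: "xs \<noteq> [] \<Longrightarrow> pw w (a # xs) = w (a, hd xs) + pw w xs"
  by (cases xs) auto

lemma pw_app3: "pw w (us @ [a, x, y]) = pw w (us @ [a]) + w (a, x) + w (x, y)"
proof -
  have "us @ [a, x, y] = ((us @ [a]) @ [x]) @ [y]" by simp
  then show ?thesis using pw_snoc[of "(us @ [a]) @ [x]" w y] pw_snoc[of "us @ [a]" w x] by simp
qed

lemma filler: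
  assumes "r + length L \<le> n - 1"
  shows "\<exists>mid. length mid = r \<and> distinct mid \<and> set mid \<subseteq> {1..<n} \<and> set mid \<inter> set L = {}"
proof -
  have "card {1..<n} - card (set L) \<le> card ({1..<n} - set L)"
    by (rule diff_card_le_card_Diff) simp
  moreover have "card (set L) \<le> length L" by (rule card_length)
  ultimately have "r \<le> card ({1..<n} - set L)" using assms by simp
  then obtain T where T: "T \<subseteq> {1..<n} - set L" "card T = r"
    by (meson obtain_subset_with_card_n)
  have fT: "finite T" using T(1) finite_subset by blast
  show ?thesis
    by (rule exI[of _ "sorted_list_of_set T"]) (use T fT in auto)
qed

lemma is_p_path_intro:
  assumes "2 \<le> p" "distinct xs" "set xs \<subseteq> {1..<n}" "length xs = p - 1"
  shows "is_p_path n p (0 # xs @ [n])"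
proof -
  let ?vs = "0 # xs @ [n]"
  have xs_ne: "xs \<noteq> []" using assms(1,4) by auto
  then have n2: "2 \<le> n" using assms(3) by (cases xs) auto
  have len: "length ?vs = p + 1" using assms(1,4) by simp
  have dist: "distinct ?vs" using assms(2,3) n2 by auto
  have sub: "set ?vs \<subseteq> {..n}" using assms(3) by auto
  have v0: "?vs ! 0 = 0" by simp
  have vp: "?vs ! p = n" using assms(1,4) by (simp add: nth_append)
  have arcs: "(?vs ! i, ?vs ! Suc i) \<in> arcs n" if "i < p" for i
  proof -
    have i1: "i < length ?vs" "Suc i < length ?vs" "0 < length ?vs" "p < length ?vs" using that len by auto
    have a1: "?vs ! i \<le> n" "?vs ! Suc i \<le> n" using sub i1 nth_mem by (metis atMost_iff subsetD)+
    have a2: "?vs ! i \<noteq> ?vs ! Suc i" using nth_eq_iff_index_eq[OF dist i1(1,2)] by simp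
    have a3: "?vs ! Suc i \<noteq> 0" using nth_eq_iff_index_eq[OF dist i1(2,3)] v0 by simp
    have a4: "?vs ! i \<noteq> n" using nth_eq_iff_index_eq[OF dist i1(1,4)] vp that by simp
    have a5: "(?vs ! i, ?vs ! Suc i) \<noteq> (0, n)"
    proof
      assume h: "(?vs ! i, ?vs ! Suc i) = (0, n)"
      then have "i = 0" using nth_eq_iff_index_eq[OF dist i1(1,3)] v0 by simp
      moreover have "Suc i = p" using h nth_eq_iff_index_eq[OF dist i1(2,4)] vp by simp
      ultimately show False using assms(1) by simp
    qed
    show ?thesis unfolding arcs_def using a1 a2 a3 a4 a5 by auto
  qed
  show ?thesis unfolding is_p_path_def using len dist arcs by (simp add: last_append)
qed

lemma is_p_path_elim:
  assumes "is_p_path n p vs" "1 \<le> p"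
  shows "\<exists>xs. vs = 0 # xs @ [n] \<and> distinct xs \<and> set xs \<subseteq> {1..<n} \<and> length xs = p - 1"
proof -
  have len: "length vs = p + 1" and dist: "distinct vs" and hd: "hd vs = 0" and lst: "last vs = n"
    and arc: "\<forall>i<p. (vs ! i, vs ! Suc i) \<in> arcs n" using assms(1) unfolding is_p_path_def by auto
  obtain ys where ys: "vs = 0 # ys" using hd len by (cases vs) auto
  have "ys \<noteq> []" using ys len assms(2) by auto
  then obtain xs where xs: "ys = xs @ [n]" using lst ys by (metis append_butlast_last_id last_ConsR)
  have vs: "vs = 0 # xs @ [n]" using ys xs by simp
  have lx: "length xs = p - 1" using len vs by simp
  have dx: "distinct xs" using dist vs by simp
  have "set xs \<subseteq> {1..<n}"
  proof
    fix x assume x: "x \<in> set xs"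
    then obtain k where k: "k < length xs" "xs ! k = x" by (auto simp: in_set_conv_nth)
    have "vs ! Suc k = x" using vs k by (simp add: nth_append)
    moreover have "Suc k < p" using k lx by simp
    ultimately have "(x, vs ! Suc (Suc k)) \<in> arcs n" using arc by metis
    then have "x \<le> n" unfolding arcs_def by simp
    moreover have "x \<noteq> 0" using dist vs x by (metis distinct.simps(2) list.set_intros(1) set_ConsD set_append Un_iff)
    moreover have "x \<noteq> n" using dist vs x by auto
    ultimately show "x \<in> {1..<n}" by simp
  qed
  then show ?thesis using vs dx lx by blast
qed

lemma core:
  fixes w :: "nat \<times> nat \<Rightarrow> real"
  assumes p4: "4 \<le> p" and pn: "p + 1 \<le> n" and j: "1 \<le> j" "j < n"
    and H: "\<And>xs. distinct xs \<Longrightarrow> set xs \<subseteq> {1..<n} \<Longrightarrow> length xs = p - 1 \<Longrightarrow> j \<in> set xs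
             \<Longrightarrow> pw w (0 # xs @ [n]) = K"
    and Q: "distinct xs" "set xs \<subseteq> {1..<n} - {j}" "length xs = p - 1"
    and Y: "distinct ys" "set ys \<subseteq> {1..<n} - {j}" "length ys = p - 1"
  shows "pw w (0 # xs @ [n]) = pw w (0 # ys @ [n])"
proof -
  define I' where "I' = {1..<n} - {j}"
  have S1a: "w (0, x) + w (x, z) = w (0, x') + w (x', z)"
    if "x \<in> I'" "x' \<in> I'" "z \<in> I'" "x \<noteq> x'" "x \<noteq> z" "x' \<noteq> z" for x x' z
  proof -
    have fl: "p - 4 + length ([x, x', z, j]) \<le> n - 1" using pn p4 by simp
    obtain mid where mid: "length mid = p - 4" "distinct mid" "set mid \<subseteq> {1..<n}"
      "set mid \<inter> set [x, x', z, j] = {}"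
      using filler[of "p - 4" "[x, x', z, j]" n, OF fl] by blast
    have "pw w (0 # (x # z # j # mid) @ [n]) = K"
      by (rule H) (use that mid j p4 in \<open>auto simp: I'_def\<close>)
    moreover have "pw w (0 # (x' # z # j # mid) @ [n]) = K"
      by (rule H) (use that mid j p4 in \<open>auto simp: I'_def\<close>)
    ultimately show ?thesis by simp
  qed
  have S1b: "w (0, x) + w (x, j) = w (0, x') + w (x', j)"
    if "x \<in> I'" "x' \<in> I'" "x \<noteq> x'" for x x'
  proof -
    have fl: "p - 3 + length ([x, x', j]) \<le> n - 1" using pn p4 by simp
    obtain mid where mid: "length mid = p - 3" "distinct mid" "set mid \<subseteq> {1..<n}"
      "set mid \<inter> set [x, x', j] = {}"
      using filler[of "p - 3" "[x, x', j]" n, OF fl] by blast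
    have "pw w (0 # (x # j # mid) @ [n]) = K"
      by (rule H) (use that mid j p4 in \<open>auto simp: I'_def\<close>)
    moreover have "pw w (0 # (x' # j # mid) @ [n]) = K"
      by (rule H) (use that mid j p4 in \<open>auto simp: I'_def\<close>)
    ultimately show ?thesis by simp
  qed
  have S2: "w (a, x) + w (x, j) = w (a, x') + w (x', j)"
    if "a \<in> I'" "x \<in> I'" "x' \<in> I'" "x \<noteq> x'" "a \<noteq> x" "a \<noteq> x'" for a x x'
  proof -
    have fl: "p - 4 + length ([a, x, x', j]) \<le> n - 1" using pn p4 by simp
    obtain mid where mid: "length mid = p - 4" "distinct mid" "set mid \<subseteq> {1..<n}"
      "set mid \<inter> set [a, x, x', j] = {}"
      using filler[of "p - 4" "[a, x, x', j]" n, OF fl] by blast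
    have "pw w (0 # (a # x # j # mid) @ [n]) = K"
      by (rule H) (use that mid j p4 in \<open>auto simp: I'_def\<close>)
    moreover have "pw w (0 # (a # x' # j # mid) @ [n]) = K"
      by (rule H) (use that mid j p4 in \<open>auto simp: I'_def\<close>)
    ultimately show ?thesis by simp
  qed
  have S3: "w (a, x) + w (x, n) = w (a, x') + w (x', n)"
    if "a \<in> I'" "x \<in> I'" "x' \<in> I'" "x \<noteq> x'" "a \<noteq> x" "a \<noteq> x'" for a x x'
  proof -
    have fl: "p - 4 + length ([a, x, x', j]) \<le> n - 1" using pn p4 by simp
    obtain mid where mid: "length mid = p - 4" "distinct mid" "set mid \<subseteq> {1..<n}"
      "set mid \<inter> set [a, x, x', j] = {}"
      using filler[of "p - 4" "[a, x, x', j]" n, OF fl] by blast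
    have "pw w (0 # (j # mid @ [a, x]) @ [n]) = K"
      by (rule H) (use that mid j p4 in \<open>auto simp: I'_def\<close>)
    moreover have "pw w (0 # (j # mid @ [a, x']) @ [n]) = K"
      by (rule H) (use that mid j p4 in \<open>auto simp: I'_def\<close>)
    moreover have "0 # (j # mid @ [a, x]) @ [n] = (0 # j # mid) @ [a, x, n]" by simp
    moreover have "0 # (j # mid @ [a, x']) @ [n] = (0 # j # mid) @ [a, x', n]" by simp
    ultimately show ?thesis using pw_app3[of w "0 # j # mid"] by simp
  qed
  define D where "D x y = w (x, y) + w (0, x) - w (0, y)" for x y
  have D1: "D x z = D x' z"
    if "x \<in> I'" "x' \<in> I'" "z \<in> I'" "x \<noteq> x'" "x \<noteq> z" "x' \<noteq> z" for x x' z
    using S1a[OF that] by (simp add: D_def)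
  have D2: "D a x = D a x'"
    if "a \<in> I'" "x \<in> I'" "x' \<in> I'" "x \<noteq> x'" "a \<noteq> x" "a \<noteq> x'" for a x x'
    using S2[OF that] S1b[OF that(2,3,4)] by (simp add: D_def)
  have finI: "finite I'" by (simp add: I'_def)
  have cardI: "card I' = n - 2" using j by (simp add: I'_def)
  have third: "\<exists>a. a \<in> I' \<and> a \<noteq> y \<and> a \<noteq> v" for y v
  proof -
    have "card (I' - {y, v}) \<ge> card I' - card {y, v}" by (rule diff_card_le_card_Diff) simp
    moreover have "card {y, v} \<le> 2" by (simp add: card_insert_if)
    ultimately have "card (I' - {y, v}) > 0" using cardI pn p4 by linarith
    then obtain a where "a \<in> I' - {y, v}" by (metis card_gt_0_iff ex_in_conv)
    then show ?thesis by auto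
  qed
  have Dc: "D x y = D u v"
    if "x \<in> I'" "y \<in> I'" "u \<in> I'" "v \<in> I'" "x \<noteq> y" "u \<noteq> v" for x y u v
  proof -
    obtain a where a: "a \<in> I'" "a \<noteq> y" "a \<noteq> v" using third by blast
    have "D x y = D a y" using D1[of x a y] that a by (cases "x = a") auto
    also have "\<dots> = D a v" using D2[of a y v] that a by (cases "y = v") auto
    also have "\<dots> = D u v" using D1[of a u v] that a by (cases "a = u") auto
    finally show ?thesis .
  qed
  obtain u0 where u0: "u0 \<in> I'" using third by blast
  obtain v0 where v0: "v0 \<in> I'" "v0 \<noteq> u0" using third by blast
  define \<nu> where "\<nu> = D u0 v0"
  have Dnu: "w (x, y) = \<nu> - w (0, x) + w (0, y)" if "x \<in> I'" "y \<in> I'" "x \<noteq> y" for x y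
    using Dc[of x y u0 v0] that u0 v0 by (simp add: \<nu>_def D_def)
  have tele: "pw w zs = (real (length zs) - 1) * \<nu> - w (0, hd zs) + w (0, last zs)"
    if "distinct zs" "set zs \<subseteq> I'" "zs \<noteq> []" for zs
    using that
  proof (induction zs)
    case (Cons z zs)
    show ?case
    proof (cases zs)
      case Nil then show ?thesis by simp
    next
      case (Cons y zs')
      have "pw w (z # zs) = w (z, y) + pw w zs" using Cons by simp
      also have "pw w zs = (real (length zs) - 1) * \<nu> - w (0, hd zs) + w (0, last zs)"
        using Cons.IH Cons.prems Cons by auto
      also have "w (z, y) = \<nu> - w (0, z) + w (0, y)" using Cons.prems Cons by (intro Dnu) auto
      finally show ?thesis using Cons by (simp add: algebra_simps)
    qed
  qed simp
  have C2: "w (0, x) + w (x, n) = w (0, x') + w (x', n)" if "x \<in> I'" "x' \<in> I'" for x x'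
  proof (cases "x = x'")
    case False
    obtain a where a: "a \<in> I'" "a \<noteq> x" "a \<noteq> x'" using third by blast
    show ?thesis using S3[of a x x'] Dnu[of a x] Dnu[of a x'] a that False by simp
  qed simp
  have full: "pw w (0 # zs @ [n]) = (real p - 2) * \<nu> + (w (0, last zs) + w (last zs, n))"
    if "distinct zs" "set zs \<subseteq> I'" "length zs = p - 1" for zs
  proof -
    have ne: "zs \<noteq> []" using that p4 by auto
    have "pw w (0 # zs @ [n]) = w (0, hd zs) + pw w (zs @ [n])"
      using pw_cons[of "zs @ [n]" w 0] ne by simp
    also have "pw w (zs @ [n]) = pw w zs + w (last zs, n)" using pw_snoc[OF ne] by simp
    also have "pw w zs = (real (length zs) - 1) * \<nu> - w (0, hd zs) + w (0, last zs)"
      using tele that ne by blast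
    finally show ?thesis using that p4 by (simp add: algebra_simps of_nat_diff)
  qed
  have nxs: "xs \<noteq> []" "ys \<noteq> []" using Q(3) Y(3) p4 by auto
  have lx: "last xs \<in> I'" "last ys \<in> I'"
    using last_in_set[OF nxs(1)] last_in_set[OF nxs(2)] Q(2) Y(2) unfolding I'_def by blast+
  show ?thesis using full[of xs] full[of ys] Q Y C2[OF lx] unfolding I'_def by simp
qed

definition chi :: "nat list \<Rightarrow> point" where "chi vs = incidence (path_arcs vs)"

lemma lin_diff:
  assumes "Vector_Spaces.linear sc (*) f" shows "f (x - y) = f x - f y"
proof -
  have mh: "module_hom sc (*) f" using assms by (rule module_hom_linearI)
  show ?thesis by (rule module_hom.diff[OF mh])
qed

lemma lin_sum:
  assumes "Vector_Spaces.linear sc (*) f" shows "f (sum g S) = (\<Sum>a\<in>S. f (g a))"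
proof -
  have mh: "module_hom sc (*) f" using assms by (rule module_hom_linearI)
  show ?thesis by (rule module_hom.sum[OF mh])
qed

lemma incidence_sum: "finite F \<Longrightarrow> incidence F = (\<Sum>a\<in>F. incidence {a})"
  by (rule ext) (simp add: sum_fun_apply incidence_def sum.delta)

lemma f_chi:
  assumes "Vector_Spaces.linear sc (*) f" "distinct vs"
  shows "f (chi vs) = pw (\<lambda>a. f (incidence {a})) vs"
proof -
  have "f (chi vs) = f (\<Sum>a\<in>path_arcs vs. incidence {a})"
    unfolding chi_def path_arcs_def by (subst incidence_sum) auto
  also have "\<dots> = (\<Sum>a\<in>path_arcs vs. f (incidence {a}))" by (rule lin_sum[OF assms(1)])
  also have "\<dots> = pw (\<lambda>a. f (incidence {a})) vs" unfolding path_arcs_def by (rule pw_set[OF assms(2), symmetric])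
  finally show ?thesis .
qed

lemma path_arcs_sub:
  assumes "is_p_path n p vs" shows "path_arcs vs \<subseteq> arcs n"
proof
  fix e assume "e \<in> path_arcs vs"
  then obtain i where i: "i < min (length vs) (length (tl vs))" "e = (vs ! i, tl vs ! i)"
    unfolding path_arcs_def set_zip by auto
  have "length vs = p + 1" using assms unfolding is_p_path_def by simp
  then have "i < p" "tl vs ! i = vs ! Suc i" using i(1) by (auto simp: nth_tl)
  then show "e \<in> arcs n" using assms i(2) unfolding is_p_path_def by auto
qed

lemma pw_fst:
  "distinct vs \<Longrightarrow> pw (\<lambda>a. if fst a = j then 1 else 0) vs = (if j \<in> set (butlast vs) then 1 else 0)"
proof (induction "\<lambda>a::nat\<times>nat. if fst a = j then (1::real) else 0" vs rule: pw.induct)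
  case (1 x y zs)
  then show ?case by (cases "x = j") (auto dest: in_set_butlastD)
qed auto

lemma finite_arcs: "finite (arcs n)"
proof -
  have "arcs n \<subseteq> {..n} \<times> {..n}" unfolding arcs_def by auto
  then show ?thesis by (rule finite_subset) simp
qed

lemma ell_chi:
  assumes "is_p_path n p vs"
  shows "xsum (chi vs) (delta_out n j) = (if j \<in> set (butlast vs) then 1 else 0)"
proof -
  have dist: "distinct vs" using assms unfolding is_p_path_def by simp
  have finD: "finite (delta_out n j)" unfolding delta_out_def using finite_arcs by simp
  have sub: "path_arcs vs \<subseteq> arcs n" by (rule path_arcs_sub[OF assms])
  have finP: "finite (path_arcs vs)" unfolding path_arcs_def by simp
  have "xsum (chi vs) (delta_out n j) = (\<Sum>a\<in>delta_out n j. if a \<in> path_arcs vs then 1 else 0)"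
    unfolding xsum_def chi_def incidence_def by simp
  also have "\<dots> = (\<Sum>a\<in>delta_out n j \<inter> path_arcs vs. 1)"
    by (rule sum.inter_restrict[OF finD, symmetric])
  also have "delta_out n j \<inter> path_arcs vs = path_arcs vs \<inter> {a. fst a = j}"
    using sub unfolding delta_out_def by auto
  also have "(\<Sum>a\<in>path_arcs vs \<inter> {a. fst a = j}. (1::real)) = (\<Sum>a\<in>path_arcs vs. if a \<in> {a. fst a = j} then 1 else 0)"
    by (rule sum.inter_restrict[OF finP])
  also have "\<dots> = pw (\<lambda>a. if fst a = j then 1 else 0) vs"
    unfolding path_arcs_def using pw_set[OF dist, of "\<lambda>a. if fst a = j then 1 else 0"] by simp
  also have "\<dots> = (if j \<in> set (butlast vs) then 1 else 0)" by (rule pw_fst[OF dist])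
  finally show ?thesis .
qed

lemma conv_mem: "x \<in> S \<Longrightarrow> x \<in> conv_hull S"
  unfolding conv_hull_def
  by (rule CollectI, rule exI[of _ 1], rule exI[of _ "\<lambda>_. 1"], rule exI[of _ "\<lambda>_. x"]) auto

lemma conv_le:
  assumes "finite D" "\<forall>s\<in>S. xsum s D \<le> 1" "x \<in> conv_hull S"
  shows "xsum x D \<le> 1"
proof -
  obtain k :: nat and c v where h: "\<forall>i<k. c i \<ge> (0::real) \<and> v i \<in> S" "(\<Sum>i<k. c i) = 1"
    "x = (\<lambda>a. \<Sum>i<k. c i * v i a)"
    using assms(3) unfolding conv_hull_def by blast
  have "xsum x D = (\<Sum>a\<in>D. \<Sum>i<k. c i * v i a)" unfolding xsum_def h(3) by simp
  also have "\<dots> = (\<Sum>i<k. c i * xsum (v i) D)"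
    unfolding xsum_def by (subst sum.swap) (simp add: sum_distrib_left)
  also have "\<dots> \<le> (\<Sum>i<k. c i * 1)"
  proof (rule sum_mono)
    fix i assume "i \<in> {..<k}"
    then have "c i \<ge> 0" "xsum (v i) D \<le> 1" using h(1) assms(2) by auto
    then show "c i * xsum (v i) D \<le> c i * 1" by (rule mult_left_mono[rotated])
  qed
  also have "\<dots> = 1" using h(2) by simp
  finally show ?thesis .
qed

lemma conv_diff_span:
  assumes "x \<in> conv_hull S" "\<forall>s\<in>S. s - x0 \<in> V.span W"
  shows "x - x0 \<in> V.span W"
proof -
  obtain k :: nat and c v where h: "\<forall>i<k. c i \<ge> (0::real) \<and> v i \<in> S" "(\<Sum>i<k. c i) = 1"
    "x = (\<lambda>a. \<Sum>i<k. c i * v i a)"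
    using assms(1) unfolding conv_hull_def by blast
  have "x - x0 = (\<Sum>i<k. sc (c i) (v i - x0))"
  proof
    fix a
    have "(\<Sum>i<k. sc (c i) (v i - x0)) a = (\<Sum>i<k. c i * v i a) - (\<Sum>i<k. c i) * x0 a"
      by (simp add: sum_fun_apply algebra_simps sum_subtractf sum_distrib_right sum_distrib_left)
    then show "(x - x0) a = (\<Sum>i<k. sc (c i) (v i - x0)) a" using h(2,3) by simp
  qed
  also have "\<dots> \<in> V.span W"
    by (rule V.span_sum, rule V.span_scale) (use h(1) assms(2) in auto)
  finally show ?thesis .
qed

lemma conv_support:
  assumes "x \<in> conv_hull S" "\<forall>s\<in>S. \<forall>a. a \<notin> Ar \<longrightarrow> s a = 0" "a \<notin> Ar"
  shows "x a = 0"
proof -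
  obtain k :: nat and c v where h: "\<forall>i<k. c i \<ge> (0::real) \<and> v i \<in> S" "(\<Sum>i<k. c i) = 1"
    "x = (\<lambda>a. \<Sum>i<k. c i * v i a)"
    using assms(1) unfolding conv_hull_def by blast
  have "v i a = 0" if "i < k" for i using h(1) assms(2,3) that by blast
  then show ?thesis unfolding h(3) by simp
qed

lemma support_span:
  assumes "finite Ar" "\<forall>a. a \<notin> Ar \<longrightarrow> x a = 0"
  shows "x \<in> V.span ((\<lambda>a. incidence {a}) ` Ar)"
proof -
  have "x = (\<Sum>a\<in>Ar. sc (x a) (incidence {a}))"
  proof
    fix b
    have "(\<Sum>a\<in>Ar. sc (x a) (incidence {a})) b = (\<Sum>a\<in>Ar. if b = a then x a else 0)"
      unfolding sum_fun_apply by (rule sum.cong) (auto simp: incidence_def)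
    also have "\<dots> = (if b \<in> Ar then x b else 0)" by (simp add: sum.delta assms(1))
    also have "\<dots> = x b"
    proof (cases "b \<in> Ar")
      case False
      then have "x b = 0" using assms(2) by blast
      then show ?thesis using False by simp
    qed simp
    finally show "x b = (\<Sum>a\<in>Ar. sc (x a) (incidence {a})) b" by simp
  qed
  also have "\<dots> \<in> V.span ((\<lambda>a. incidence {a}) ` Ar)"
    by (rule V.span_sum, rule V.span_scale, rule V.span_base) auto
  finally show ?thesis .
qed

lemma ell_linear: "Vector_Spaces.linear sc (*) (\<lambda>x. xsum x D)"
  unfolding Vector_Spaces.linear_iff using V.vector_space_axioms R.vector_space_axioms
  by (auto simp: xsum_def sum.distrib sum_distrib_left)

lemma dist0n:
  fixes n :: nat
  assumes "0 < n" "distinct xs" "set xs \<subseteq> {1..<n}"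
  shows "distinct (0 # xs @ [n])"
proof -
  have "\<forall>x\<in>set xs. 1 \<le> x \<and> x < n" using assms(3) by auto
  then have "0 \<notin> set xs" "n \<notin> set xs" by auto
  then show ?thesis using assms(1,2) by simp
qed

theorem theorem11:
  fixes n p j :: nat
  assumes "4 \<le> p" and "p \<le> n - 1" and "1 \<le> j" and "j \<le> n - 1"
  shows "(\<forall>x\<in>path_polytope n p. xsum x (delta_out n j) \<le> 1) \<and>
         facet_defining (path_polytope n p) (delta_out n j) 1"
proof -
  have p4: "4 \<le> p" and pn: "p + 1 \<le> n" and j: "1 \<le> j" "j < n" using assms by auto
  define D where "D = delta_out n j"
  define Paths where "Paths = {incidence (path_arcs vs) | vs. is_p_path n p vs}"
  define P where "P = conv_hull Paths"
  have PP: "path_polytope n p = P" unfolding P_def Paths_def path_polytope_def by simp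
  have finD: "finite D" unfolding D_def delta_out_def using finite_arcs by simp
  have Paths_el: "\<exists>xs. s = chi (0 # xs @ [n]) \<and> distinct xs \<and> set xs \<subseteq> {1..<n} \<and> length xs = p - 1"
    if sP: "s \<in> Paths" for s
  proof -
    obtain vs where vs: "s = incidence (path_arcs vs)" "is_p_path n p vs" using sP unfolding Paths_def by blast
    obtain xs where xs: "vs = 0 # xs @ [n]" "distinct xs" "set xs \<subseteq> {1..<n}" "length xs = p - 1"
      using is_p_path_elim[OF vs(2)] p4 by auto
    show ?thesis using vs xs unfolding chi_def by blast
  qed
  have chi_in: "chi (0 # xs @ [n]) \<in> Paths"
    if "distinct xs" "set xs \<subseteq> {1..<n}" "length xs = p - 1" for xs
    using is_p_path_intro[of p xs n] that p4 unfolding Paths_def chi_def by auto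
  have ell_path: "xsum (chi (0 # xs @ [n])) D = (if j \<in> set xs then 1 else 0)"
    if "distinct xs" "set xs \<subseteq> {1..<n}" "length xs = p - 1" for xs
  proof -
    have "is_p_path n p (0 # xs @ [n])" using is_p_path_intro[of p xs n] that p4 by auto
    from ell_chi[OF this, of j] show ?thesis using j unfolding D_def by (simp add: butlast_append)
  qed
  have supp: "\<forall>s\<in>Paths. \<forall>a. a \<notin> arcs n \<longrightarrow> s a = 0"
  proof (intro ballI allI impI)
    fix s a assume "s \<in> Paths" "a \<notin> arcs n"
    then obtain vs where "s = incidence (path_arcs vs)" "is_p_path n p vs" unfolding Paths_def by blast
    then show "s a = 0" using path_arcs_sub \<open>a \<notin> arcs n\<close> unfolding incidence_def by auto
  qed
  have ellP: "\<forall>s\<in>Paths. xsum s D \<le> 1"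
  proof
    fix s assume "s \<in> Paths"
    then obtain xs where "s = chi (0 # xs @ [n])" "distinct xs" "set xs \<subseteq> {1..<n}" "length xs = p - 1"
      using Paths_el by blast
    then show "xsum s D \<le> 1" using ell_path by simp
  qed
  have valid: "\<forall>x\<in>P. xsum x D \<le> 1" using conv_le[OF finD ellP] unfolding P_def by blast
  have fl0: "p - 2 + length [j] \<le> n - 1" using pn p4 by simp
  obtain m0 where m0: "length m0 = p - 2" "distinct m0" "set m0 \<subseteq> {1..<n}" "set m0 \<inter> set [j] = {}"
    using filler[OF fl0] by blast
  have fl1: "p - 1 + length [j] \<le> n - 1" using pn p4 by simp
  obtain m1 where m1: "length m1 = p - 1" "distinct m1" "set m1 \<subseteq> {1..<n}" "set m1 \<inter> set [j] = {}"
    using filler[OF fl1] by blast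
  define x0 where "x0 = chi (0 # (j # m0) @ [n])"
  define y where "y = chi (0 # m1 @ [n])"
  have x0P: "x0 \<in> Paths" unfolding x0_def by (rule chi_in) (use m0 j p4 in auto)
  have yP: "y \<in> Paths" unfolding y_def by (rule chi_in) (use m1 in auto)
  have ellx0: "xsum x0 D = 1" unfolding x0_def by (subst ell_path) (use m0 j p4 in auto)
  have elly: "xsum y D = 0" unfolding y_def by (subst ell_path) (use m1 in auto)
  define F where "F = {x \<in> P. xsum x D = 1}"
  define E where "E = (\<lambda>a. incidence {a}) ` arcs n"
  have finE: "finite E" unfolding E_def using finite_arcs by simp
  have PE: "P \<subseteq> V.span E"
  proof
    fix x assume "x \<in> P"
    then have "\<forall>a. a \<notin> arcs n \<longrightarrow> x a = 0"
      using conv_support[OF _ supp] unfolding P_def by blast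
    then show "x \<in> V.span E" unfolding E_def by (rule support_span[OF finite_arcs])
  qed
  have x0inP: "x0 \<in> P" unfolding P_def using conv_mem[OF x0P] .
  have yinP: "y \<in> P" unfolding P_def using conv_mem[OF yP] .
  have x0F: "x0 \<in> F" unfolding F_def using x0inP ellx0 by simp
  have FP: "F \<subseteq> P" unfolding F_def by auto
  define DP where "DP = (\<lambda>x. x - x0) ` P"
  define DF where "DF = (\<lambda>x. x - x0) ` F"
  have DPE: "DP \<subseteq> V.span E"
    unfolding DP_def using PE x0inP by (auto intro!: V.span_diff)
  have DFE: "DF \<subseteq> V.span E"
    unfolding DF_def using PE FP x0inP by (auto intro!: V.span_diff)
  have adimP: "adim P = int (V.dim DP)" unfolding DP_def by (rule adim_eq[OF finE DPE[unfolded DP_def] x0inP])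
  have adimF: "adim F = int (V.dim DF)" unfolding DF_def by (rule adim_eq[OF finE DFE[unfolded DF_def] x0F])
  define Jv where "Jv = {chi (0 # xs @ [n]) | xs. distinct xs \<and> set xs \<subseteq> {1..<n} \<and> length xs = p - 1 \<and> j \<in> set xs}"
  define DJ where "DJ = (\<lambda>x. x - x0) ` Jv"
  have JF: "Jv \<subseteq> F"
  proof
    fix x assume "x \<in> Jv"
    then obtain xs where xs: "x = chi (0 # xs @ [n])" "distinct xs" "set xs \<subseteq> {1..<n}" "length xs = p - 1" "j \<in> set xs"
      unfolding Jv_def by blast
    have "x \<in> P" unfolding P_def xs(1) by (rule conv_mem, rule chi_in) (use xs in auto)
    moreover have "xsum x D = 1" unfolding xs(1) by (subst ell_path) (use xs in auto)
    ultimately show "x \<in> F" unfolding F_def by simp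
  qed
  have DJF: "DJ \<subseteq> DF" unfolding DJ_def DF_def using JF by blast
  have key: "chi (0 # xs @ [n]) - y \<in> V.span DJ"
    if xs: "distinct xs" "set xs \<subseteq> {1..<n} - {j}" "length xs = p - 1" for xs
  proof (rule ccontr)
    assume nin: "chi (0 # xs @ [n]) - y \<notin> V.span DJ"
    obtain f where f: "Vector_Spaces.linear sc (*) f" "\<forall>g\<in>DJ. f g = 0" "f (chi (0 # xs @ [n]) - y) = 1"
      using exists_functional[OF nin] by blast
    define w where "w a = f (incidence {a})" for a
    have fchi: "f (chi (0 # zs @ [n])) = pw w (0 # zs @ [n])"
      if "distinct zs" "set zs \<subseteq> {1..<n}" for zs
      unfolding w_def by (rule f_chi[OF f(1) dist0n]) (use that j in auto)
    have H: "pw w (0 # zs @ [n]) = f x0"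
      if "distinct zs" "set zs \<subseteq> {1..<n}" "length zs = p - 1" "j \<in> set zs" for zs
    proof -
      have "chi (0 # zs @ [n]) \<in> Jv" unfolding Jv_def using that by blast
      then have "f (chi (0 # zs @ [n]) - x0) = 0" using f(2) unfolding DJ_def by blast
      then have "f (chi (0 # zs @ [n])) = f x0" using lin_diff[OF f(1)] by simp
      then show ?thesis using fchi[OF that(1,2)] by simp
    qed
    have "pw w (0 # xs @ [n]) = pw w (0 # m1 @ [n])"
      by (rule core[OF p4 pn j H xs]) (use m1 in auto)
    then have "f (chi (0 # xs @ [n])) = f y"
      unfolding y_def using fchi[of xs] fchi[of m1] xs m1 by auto
    then have "f (chi (0 # xs @ [n]) - y) = 0" using lin_diff[OF f(1)] by simp
    then show False using f(3) by simp
  qed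
  define d where "d = y - x0"
  have DP_sub: "DP \<subseteq> V.span (insert d DJ)"
  proof
    fix z assume "z \<in> DP"
    then obtain x where x: "x \<in> P" "z = x - x0" unfolding DP_def by blast
    have "\<forall>s\<in>Paths. s - x0 \<in> V.span (insert d DJ)"
    proof
      fix s assume "s \<in> Paths"
      then obtain xs where xs: "s = chi (0 # xs @ [n])" "distinct xs" "set xs \<subseteq> {1..<n}" "length xs = p - 1"
        using Paths_el by blast
      show "s - x0 \<in> V.span (insert d DJ)"
      proof (cases "j \<in> set xs")
        case True
        then have "s \<in> Jv" unfolding Jv_def using xs by blast
        then have "s - x0 \<in> insert d DJ" unfolding DJ_def by blast
        then show ?thesis by (rule V.span_base)
      next
        case False
        have "s - y \<in> V.span DJ" unfolding xs(1) by (rule key) (use xs False in auto)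
        then have a: "s - y \<in> V.span (insert d DJ)" using V.span_mono[of DJ "insert d DJ"] by blast
        have b: "d \<in> V.span (insert d DJ)" by (rule V.span_base) simp
        have e: "s - x0 = (s - y) + d" unfolding d_def by simp
        show ?thesis unfolding e by (rule V.span_add[OF a b])
      qed
    qed
    then show "z \<in> V.span (insert d DJ)" using conv_diff_span x unfolding P_def by blast
  qed
  have dDP: "d \<in> DP" unfolding d_def DP_def using yinP by blast
  have DJE: "DJ \<subseteq> V.span E" using DJF DFE by blast
  have insE: "insert d DJ \<subseteq> V.span E" using DJE dDP DPE by blast
  have le1: "V.dim DP \<le> V.dim (insert d DJ)" by (rule dim_mono'[OF finE insE DP_sub])
  have le2: "V.dim (insert d DJ) \<le> V.dim DJ + 1" by (rule dim_insert_le[OF finE DJE])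
  have le3: "V.dim DJ \<le> V.dim DF"
    by (rule dim_mono'[OF finE DFE]) (use DJF V.span_superset in blast)
  have ell_lin: "Vector_Spaces.linear sc (*) (\<lambda>x. xsum x D)" by (rule ell_linear)
  have ell0: "xsum z D = 0" if zDF: "z \<in> DF" for z
  proof -
    obtain x where "x \<in> F" "z = x - x0" using zDF unfolding DF_def by blast
    then show ?thesis using lin_diff[OF ell_lin, of x x0] ellx0 unfolding F_def by simp
  qed
  have dnot: "d \<notin> V.span DF"
  proof
    assume "d \<in> V.span DF"
    then have "xsum d D = 0" using lin_vanish[OF ell_lin ell0] by blast
    moreover have "xsum d D = -1" unfolding d_def using lin_diff[OF ell_lin, of y x0] ellx0 elly by simp
    ultimately show False by simp
  qed
  have DFDP: "DF \<subseteq> DP" unfolding DF_def DP_def using FP by blast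
  have ins2: "insert d DF \<subseteq> V.span DP" using dDP DFDP V.span_superset by blast
  have ge: "V.dim DF + 1 \<le> V.dim DP" by (rule dim_insert_ge[OF finE DPE dnot ins2])
  have "adim F = adim P - 1" using adimP adimF le1 le2 le3 ge by simp
  then show ?thesis unfolding facet_defining_def PP using valid unfolding D_def F_def by simp
qed

end
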